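(* With notation as in the context, let $V$ be a finite-dimensional $K$-vector space with a $K$-linear automorphism $[1]:V\to V$ (i.e. a finite-dimensional $K$-linear representation of $\mathbb{Z}$). Consider the $E_A$-module $V\otimes_KE_A$ with the $\sigma$-semilinear automorphism $[1](v\otimes x)=[1](v)\otimes\sigma(x)$. Then $V\otimes_KE_A$ is trivial, i.e. it has an $E_A$-basis $b''_1,\dots,b''_n$ with $[1](b''_i)=b''_i$ for all $i$; equivalently, it is isomorphic, $E_A$-linearly and compatibly with the actions, to $E_A^n$ with the action of $\sigma$ componentwise.
   Context: $K$ is an algebraically closed field of characteristic $0$. $K[t^K]$ is the group algebra over $K$ of $(K,+)$, with $K$-basis $t^a$ ($a\in K$), $t^at^b=t^{a+b}$; $K[t,t^{-1}]$ is identified with the span of $t^n$, $n\in\mathbb{Z}$. Fix a set $\widetilde{K/\mathbb{Z}}\subset K$ of representatives of $K/\mathbb{Z}$ with $0\in\widetilde{K/\mathbb{Z}}$. $A$ is a commutative ring with unit containing $K[t,t^{-1}]$ as a subring, with a derivation $\partial:A\to A$ extending $t\frac{d}{dt}$ on $K[t,t^{-1}]$. $A[t^K]:=A\otimes_{K[t,t^{-1}]}K[t^K]$ and $E_A:=A[t^K][\ell]$ with $\ell$ an indeterminate. Fix a group isomorphism $\overline{\gamma}:K/\mathbb{Z}\to K^\times$ and set $\gamma:=\overline{\gamma}\circ\pi:K\to K^\times$ ($\pi$ the projection). $\sigma$ is the unique ring automorphism of $E_A$ with $\sigma(f)=f$ for $f\in A$, $\sigma(t^a)=\gamma(a)t^a$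 for $a\in K$, $\sigma(\ell)=\ell+1$. *)

theory Defs
  imports "HOL-Computational_Algebra.Polynomial" "Jordan_Normal_Form.Matrix"
begin

definition alg_closed :: "'k::field itself \<Rightarrow> bool" where
  "alg_closed _ \<longleftrightarrow> (\<forall>p::'k poly. degree p > 0 \<longrightarrow> (\<exists>x. poly p x = 0))"

definition ring_hom_fun :: "('a::comm_ring_1 \<Rightarrow> 'b::comm_ring_1) \<Rightarrow> bool" where
  "ring_hom_fun f \<longleftrightarrow> f 0 = 0 \<and> f 1 = 1 \<and> (\<forall>x y. f (x + y) = f x + f y) \<and>
     (\<forall>x y. f (x * y) = f x * f y)"

text \<open>A contains K[t,t^-1] as a subring: cK embeds K, T is the image of t, T is a unit
  and the induced map K[t,t^-1] -> A is injective (equivalently, since T is a unit,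
  K[t] -> A is injective).\<close>
definition laurent_subring :: "('k::field \<Rightarrow> 'a::comm_ring_1) \<Rightarrow> 'a \<Rightarrow> bool" where
  "laurent_subring cK T \<longleftrightarrow> ring_hom_fun cK \<and> (\<exists>u. T * u = 1) \<and>
     (\<forall>p::'k poly. (\<Sum>i\<le>degree p. cK (coeff p i) * T ^ i) = 0 \<longrightarrow> p = 0)"

text \<open>A derivation of A extending t d/dt on K[t,t^-1].\<close>
definition extends_t_ddt :: "('k::field \<Rightarrow> 'a::comm_ring_1) \<Rightarrow> 'a \<Rightarrow> ('a \<Rightarrow> 'a) \<Rightarrow> bool" where
  "extends_t_ddt cK T D \<longleftrightarrow> (\<forall>x y. D (x + y) = D x + D y) \<and>
     (\<forall>x y. D (x * y) = x * D y + y * D x) \<and> (\<forall>c. D (cK c) = 0) \<and> D T = T"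

definition reps_mod_Z :: "'k::field_char_0 set \<Rightarrow> bool" where
  "reps_mod_Z R \<longleftrightarrow> 0 \<in> R \<and> (\<forall>x. \<exists>!r. r \<in> R \<and> x - r \<in> \<int>)"

text \<open>gamma = gammabar o pi with gammabar : K/Z -> K^* a group isomorphism, i.e.
  gamma is a surjective homomorphism (K,+) -> K^* with kernel exactly Z.\<close>
definition gamma_char :: "('k::field_char_0 \<Rightarrow> 'k) \<Rightarrow> bool" where
  "gamma_char \<gamma> \<longleftrightarrow> (\<forall>a b. \<gamma> (a + b) = \<gamma> a * \<gamma> b) \<and> (\<forall>a. \<gamma> a \<noteq> 0) \<and>
     (\<forall>a. \<gamma> a = 1 \<longleftrightarrow> a \<in> \<int>) \<and> (\<forall>c. c \<noteq> 0 \<longrightarrow> (\<exists>a. \<gamma> a = c))"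

text \<open>The ring E (with structure maps iA : A -> E, tt a = t^a, l = ell) is
  E_A = (A \<otimes>_{K[t,t^-1]} K[t^K])[ell]: iA is a ring map, a \<mapsto> t^a a monoid map
  (K,+) -> (E,*) agreeing with t^n on integers, and E is a free A-module with basis
  t^r ell^k (r \<in> R, k \<in> N); this presents E_A up to unique isomorphism.\<close>
definition EA_pres :: "('k::field_char_0 \<Rightarrow> 'a::comm_ring_1) \<Rightarrow> 'a \<Rightarrow> 'k set \<Rightarrow>
    ('a \<Rightarrow> 'e::comm_ring_1) \<Rightarrow> ('k \<Rightarrow> 'e) \<Rightarrow> 'e \<Rightarrow> bool" where
  "EA_pres cK T R iA tt l \<longleftrightarrow> ring_hom_fun iA \<and> tt 0 = 1 \<and>
     (\<forall>a b. tt (a + b) = tt a * tt b) \<and> (\<forall>n::nat. tt (of_nat n) = iA (T ^ n)) \<and>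
     (\<forall>x. \<exists>!f :: 'k \<times> nat \<Rightarrow> 'a. finite {p. f p \<noteq> 0} \<and> {p. f p \<noteq> 0} \<subseteq> R \<times> UNIV \<and>
        x = (\<Sum>p\<in>{p. f p \<noteq> 0}. iA (f p) * tt (fst p) * l ^ snd p))"

definition sigma_char :: "('k::field_char_0 \<Rightarrow> 'a::comm_ring_1) \<Rightarrow> ('a \<Rightarrow> 'e::comm_ring_1) \<Rightarrow>
    ('k \<Rightarrow> 'e) \<Rightarrow> 'e \<Rightarrow> ('k \<Rightarrow> 'k) \<Rightarrow> ('e \<Rightarrow> 'e) \<Rightarrow> bool" where
  "sigma_char cK iA tt l \<gamma> \<sigma> \<longleftrightarrow> ring_hom_fun \<sigma> \<and> bij \<sigma> \<and> (\<forall>f. \<sigma> (iA f) = iA f) \<and>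
     (\<forall>a. \<sigma> (tt a) = iA (cK (\<gamma> a)) * tt a) \<and> \<sigma> l = l + 1"

definition is_basis_vecs :: "nat \<Rightarrow> 'e::comm_ring_1 vec list \<Rightarrow> bool" where
  "is_basis_vecs n bs \<longleftrightarrow> length bs = n \<and> (\<forall>b\<in>set bs. b \<in> carrier_vec n) \<and>
     (\<forall>y\<in>carrier_vec n. \<exists>!c. c \<in> carrier_vec n \<and> mat_of_cols n bs *\<^sub>v c = y)"

end

theory Submission
  imports Defs "Jordan_Normal_Form.Jordan_Normal_Form_Existence" begin

lemma triangularize:
  fixes A :: "'k::field mat"
  assumes ac: "alg_closed TYPE('k)" and A: "A \<in> carrier_mat n n"
  shows "\<exists>B. B \<in> carrier_mat n n \<and> upper_triangular B \<and> similar_mat A B"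
  using A
proof (induct n arbitrary: A)
  case 0
  then show ?case by (intro exI[of _ A], auto simp: upper_triangular_def similar_mat_refl)
next
  case (Suc m A)
  define n where "n = Suc m"
  have A: "A \<in> carrier_mat n n" using Suc n_def by auto
  have "degree (char_poly A) = n" using degree_monic_char_poly[OF A] by auto
  then obtain e where "poly (char_poly A) e = 0" using ac unfolding alg_closed_def n_def by (metis zero_less_Suc)
  hence "eigenvalue A e" using eigenvalue_root_char_poly[OF A] by auto
  then obtain v where "eigenvector A v e" unfolding eigenvalue_def by auto
  hence v: "v \<in> carrier_vec n" and v0: "v \<noteq> 0\<^sub>v n" and Av: "A *\<^sub>v v = e \<cdot>\<^sub>v v"
    unfolding eigenvector_def using A by auto
  interpret vec_space "TYPE('k)" n .
  define b where "b = basis_completion v"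
  from basis_completion[OF v v0, folded b_def]
  have span_b: "span (set b) = carrier_vec n" and b: "set b \<subseteq> carrier_vec n" and hdb: "hd b = v" 
    and len_b: "length b = n" by auto
  define W where "W = mat_of_cols n b"
  have W: "W \<in> carrier_mat n n" unfolding W_def using len_b by auto
  have colW0: "col W 0 = v" unfolding W_def using hdb len_b b n_def
    by (cases b, auto simp: mat_of_cols_Cons_index_0 intro!: eq_vecI) 
  have "\<forall>j. \<exists>c. j < n \<longrightarrow> c \<in> carrier_vec n \<and> W *\<^sub>v c = unit_vec n j"
  proof (rule allI)
    fix j
    show "\<exists>c. j < n \<longrightarrow> c \<in> carrier_vec n \<and> W *\<^sub>v c = unit_vec n j"
    proof (cases "j < n")
      case True
      have "unit_vec n j \<in> span (set b)" using span_b True by auto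
      hence "unit_vec n j \<in> span_list b" using span_list_as_span[OF b] by auto
      then obtain c where "unit_vec n j = lincomb_list c b" by (auto elim: in_span_listE)
      also have "\<dots> = W *\<^sub>v vec (length b) c" unfolding W_def
        by (rule lincomb_list_as_mat_mult, insert b, auto)
      finally show ?thesis using len_b by (intro exI[of _ "vec (length b) c"], auto)
    qed auto
  qed
  from choice[OF this] obtain cf where cf: "\<And>j. j < n \<Longrightarrow> cf j \<in> carrier_vec n \<and> W *\<^sub>v cf j = unit_vec n j"
    by blast
  define Q where "Q = mat n n (\<lambda>(i,j). cf j $ i)"
  have Q: "Q \<in> carrier_mat n n" unfolding Q_def by auto
  have colQ: "\<And>j. j < n \<Longrightarrow> col Q j = cf j" proof -
    fix j assume j: "j < n"
    hence cj: "cf j \<in> carrier_vec n" using cf by auto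
    show "col Q j = cf j" unfolding Q_def using j cj by (intro eq_vecI, auto)
  qed
  have WQ: "W * Q = 1\<^sub>m n"
  proof (rule eq_matI)
    fix i j assume i: "i < dim_row (1\<^sub>m n)" and j: "j < dim_col (1\<^sub>m n)"
    have "(W * Q) $$ (i,j) = (W *\<^sub>v col Q j) $ i" using i j W Q by auto
    also have "\<dots> = unit_vec n j $ i" using colQ cf j by auto
    finally show "(W * Q) $$ (i,j) = 1\<^sub>m n $$ (i,j)" using i j by auto
  qed (insert W Q, auto)
  have QW: "Q * W = 1\<^sub>m n" by (rule mat_mult_left_right_inverse[OF W Q WQ])
  define A' where "A' = Q * A * W"
  have A': "A' \<in> carrier_mat n n" unfolding A'_def using Q A W by auto
  have QA: "Q * A \<in> carrier_mat n n" using Q A by auto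
  have "A' * Q = Q * A * (W * Q)" unfolding A'_def by (rule assoc_mult_mat[OF QA W Q])
  also have "\<dots> = Q * A" unfolding WQ by (rule right_mult_one_mat[OF QA])
  finally have A'Q: "A' * Q = Q * A" .
  have "W * A' * Q = W * (A' * Q)" by (rule assoc_mult_mat[OF W A' Q])
  also have "\<dots> = (W * Q) * A" unfolding A'Q by (rule assoc_mult_mat[OF W Q A, symmetric])
  also have "\<dots> = A" unfolding WQ by (rule left_mult_one_mat[OF A])
  finally have AWQ: "A = W * A' * Q" by simp
  have simAA': "similar_mat_wit A A' W Q"
    by (rule similar_mat_witI[of _ _ n], insert W Q A A' WQ QW AWQ, auto)
  have n0: "0 < n" unfolding n_def by simp
  have QAc: "Q * A \<in> carrier_mat n n" using Q A by auto
  have "col A' 0 = (Q * A) *\<^sub>v col W 0" unfolding A'_def by (rule col_mult2[OF QAc W n0])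
  also have "\<dots> = Q *\<^sub>v (A *\<^sub>v v)" unfolding colW0 by (rule assoc_mult_mat_vec[OF Q A v])
  also have "\<dots> = e \<cdot>\<^sub>v (Q *\<^sub>v v)" unfolding Av by (rule mult_mat_vec[OF Q v])
  also have "Q *\<^sub>v v = col (Q * W) 0" unfolding colW0[symmetric] by (rule col_mult2[OF Q W n0, symmetric])
  also have "\<dots> = unit_vec n 0" unfolding QW using n0 by simp
  finally have col0: "col A' 0 = e \<cdot>\<^sub>v unit_vec n 0" .
  obtain A1 A2 A0 A3 where splitA': "split_block A' 1 1 = (A1,A2,A0,A3)"
    by (cases "split_block A' 1 1", auto)
  from A' n_def have "dim_row A' = 1 + m" "dim_col A' = 1 + m" by auto
  from split_block[OF splitA' this] have A2: "A2 \<in> carrier_mat 1 m"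
    and A3: "A3 \<in> carrier_mat m m" 
    and A'block: "A' = four_block_mat A1 A2 A0 A3" by auto
  have A1id: "A1 = mat 1 1 (\<lambda> _. e)"
    using splitA'[unfolded split_block_def Let_def] arg_cong[OF col0, of "\<lambda> v. v $ 0"] A' n_def
    by (auto simp: col_def)
  have A1: "A1 \<in> carrier_mat 1 1" unfolding A1id by auto
  {
    fix i
    assume "i < m"
    with arg_cong[OF col0, of "\<lambda> v. v $ Suc i"] A' n_def
    have "A' $$ (Suc i, 0) = 0" by auto
  } note A'0 = this
  have A0id: "A0 = 0\<^sub>m m 1"
    using splitA'[unfolded split_block_def Let_def] A'0 A' n_def by auto
  have A0: "A0 \<in> carrier_mat m 1" unfolding A0id by auto
  from Suc(1)[OF A3] obtain B where B: "B \<in> carrier_mat m m" and ut: "upper_triangular B"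
    and simB: "similar_mat A3 B" by auto
  from simB obtain P' Q' where simIH: "similar_mat_wit A3 B P' Q'" unfolding similar_mat_def by auto
  from similar_mat_witD2[OF A3 simIH] 
  have P': "P' \<in> carrier_mat m m" and Q': "Q' \<in> carrier_mat m m" 
    and PQ': "P' * Q' = 1\<^sub>m m" by auto
  have A0_eq: "A0 = P' * A0 * 1\<^sub>m 1" unfolding A0id using P' by auto
  let ?P' = "four_block_mat (1\<^sub>m 1) (0\<^sub>m 1 m) (0\<^sub>m m 1) P'"
  let ?Q' = "four_block_mat (1\<^sub>m 1) (0\<^sub>m 1 m) (0\<^sub>m m 1) Q'"
  define C where "C = four_block_mat A1 (A2 * P') A0 B"
  have simA'C: "similar_mat_wit A' C ?P' ?Q'" unfolding A'block C_def
    by (rule similar_mat_wit_four_block[OF similar_mat_wit_refl[OF A1] simIH _ A0_eq A1 A3 A0],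
    insert PQ' A2 P' Q', auto)
  have ut1: "upper_triangular A1" unfolding A1id by (auto simp: upper_triangular_def)
  have utC: "upper_triangular C" unfolding C_def A0id
    by (intro upper_triangular_four_block[OF _ B ut1 ut], auto simp: A1id)
  have C: "C \<in> carrier_mat (Suc m) (Suc m)" unfolding C_def using A1 A2 P' A0 B by auto
  from similar_mat_wit_trans[OF simAA' simA'C]
  have "similar_mat A C" unfolding similar_mat_def by blast
  with utC C show ?case by blast
qed


lemma ring_hom_fun_crh: "ring_hom_fun f \<Longrightarrow> comm_ring_hom f"
  by (unfold_locales, auto simp: ring_hom_fun_def)

lemma inverse_from_det:
  fixes A :: "'a::comm_ring_1 mat"
  assumes A: "A \<in> carrier_mat n n" and u: "det A * u = 1"
  shows "\<exists>A'. A' \<in> carrier_mat n n \<and> A * A' = 1\<^sub>m n \<and> A' * A = 1\<^sub>m n"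
proof -
  note adj = adj_mat[OF A]
  define A' where "A' = u \<cdot>\<^sub>m adj_mat A"
  have A': "A' \<in> carrier_mat n n" unfolding A'_def using adj by auto
  have "A * A' = u \<cdot>\<^sub>m (A * adj_mat A)" unfolding A'_def by (rule mult_smult_distrib[OF A adj(1)])
  also have "\<dots> = 1\<^sub>m n" unfolding adj(2) using u by (intro eq_matI, auto simp: mult.commute)
  finally have 1: "A * A' = 1\<^sub>m n" .
  have "A' * A = u \<cdot>\<^sub>m (adj_mat A * A)" unfolding A'_def by (rule mult_smult_assoc_mat[OF adj(1) A])
  also have "\<dots> = 1\<^sub>m n" unfolding adj(3) using u by (intro eq_matI, auto simp: mult.commute)
  finally show ?thesis using 1 A' by blast
qed

lemma det_ne0_from_invertible:
  fixes M :: "'a::field mat"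
  assumes M: "M \<in> carrier_mat n n" and inv: "invertible_mat M"
  shows "det M \<noteq> 0"
proof -
  from inv obtain B where MB: "M * B = 1\<^sub>m (dim_row M)" and BM: "B * M = 1\<^sub>m (dim_row B)"
    unfolding invertible_mat_def inverts_mat_def by auto
  have "dim_col B = n" using MB M by (metis index_mult_mat(3) index_one_mat(3) carrier_matD(1))
  moreover have "dim_row B = n" using BM M by (metis index_mult_mat(3) index_one_mat(3) carrier_matD(2))
  ultimately have B: "B \<in> carrier_mat n n" by auto
  have "det M * det B = 1" using det_mult[OF M B] MB M by simp
  thus ?thesis by auto
qed

lemma jnf_nonzero:
  fixes J :: "'a::field mat"
  assumes J: "J = jordan_matrix n_as" and dJ: "det J \<noteq> 0" and nz: "0 \<notin> fst ` set n_as"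
  shows "\<forall>(m,a)\<in>set n_as. a \<noteq> 0"
proof (intro ballI, clarify)
  fix m assume mem: "(m, 0) \<in> set n_as"
  hence m: "m \<noteq> 0" using nz by force
  define N where "N = sum_list (map fst n_as)"
  have Jc: "J \<in> carrier_mat N N" unfolding J N_def by simp
  have "poly (char_poly J) 0 = prod_list (map (\<lambda>p. poly p 0) (map (\<lambda>(n, a). [:- a, 1:] ^ n) n_as))"
    unfolding J jordan_matrix_char_poly by (rule poly_prod_list)
  also have "\<dots> = 0" 
  proof -
    have "poly ([:- 0, 1:] ^ m) (0::'a) = 0" using m by (simp add: poly_power)
    hence "(0::'a) \<in> (\<lambda>x. poly (case x of (n, a) \<Rightarrow> [:- a, 1:] ^ n) 0) ` set n_as"
      using mem by (intro image_eqI[of _ _ "(m,0)"], auto)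
    thus ?thesis by (auto simp: prod_list_zero_iff)
  qed
  finally have "eigenvalue J 0" using eigenvalue_root_char_poly[OF Jc] by auto
  then obtain v where "eigenvector J v 0" unfolding eigenvalue_def by auto
  hence "v \<in> carrier_vec N" "v \<noteq> 0\<^sub>v N" "J *\<^sub>v v = 0\<^sub>v N" unfolding eigenvector_def using Jc by auto
  hence "det J = 0" using det_0_iff_vec_prod_zero[OF Jc] by blast
  with dJ show False by simp
qed

locale EAsetup =
  fixes h :: "'k::field_char_0 \<Rightarrow> 'e::comm_ring_1" and tt :: "'k \<Rightarrow> 'e" and l :: 'e
    and \<gamma> :: "'k \<Rightarrow> 'k" and \<sigma> :: "'e \<Rightarrow> 'e"
  assumes h: "ring_hom_fun h" and \<sigma>h: "ring_hom_fun \<sigma>" and \<sigma>fix: "\<And>x. \<sigma> (h x) = h x"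
  and tt0: "tt 0 = 1" and ttadd: "\<And>a b. tt (a+b) = tt a * tt b"
  and \<sigma>tt: "\<And>a. \<sigma> (tt a) = h (\<gamma> a) * tt a" and \<sigma>l: "\<sigma> l = l + 1"
  and \<gamma>surj: "\<And>c. c \<noteq> 0 \<Longrightarrow> \<exists>a. \<gamma> a = c"
begin

sublocale H: comm_ring_hom h by (rule ring_hom_fun_crh[OF h])
sublocale S: comm_ring_hom \<sigma> by (rule ring_hom_fun_crh[OF \<sigma>h])

definition bn :: "nat \<Rightarrow> 'e" where
  "bn k = h (1 / fact k) * (\<Prod>i<k. l - of_nat i)"

lemma bn0: "bn 0 = 1" unfolding bn_def by simp

lemma \<sigma>_bn_Suc: "\<sigma> (bn (Suc k)) = bn (Suc k) + bn k"
proof -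
  define P where "P = (\<Prod>i<k. l - of_nat i)"
  define c where "c = h (1 / fact (Suc k))"
  have "\<sigma> (\<Prod>i<Suc k. l - of_nat i) = (\<Prod>i<Suc k. (l + 1) - of_nat i)"
    by (simp add: S.hom_prod hom_distribs \<sigma>l)
  also have "\<dots> = (l + 1) * P" unfolding P_def prod.lessThan_Suc_shift
    by (simp add: algebra_simps)
  finally have 1: "\<sigma> (\<Prod>i<Suc k. l - of_nat i) = (l + 1) * P" .
  have 2: "(\<Prod>i<Suc k. l - of_nat i) = P * (l - of_nat k)" unfolding P_def by simp
  have eq: "(1::'k) / fact k = 1 / fact (Suc k) * of_nat (Suc k)"
    by (simp add: field_simps del: of_nat_Suc)
  have 3: "h (1 / fact k) = c * of_nat (Suc k)"
  proof -
    have "h (1 / fact k) = h (1 / fact (Suc k) * of_nat (Suc k))" using eq by (rule arg_cong)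
    also have "\<dots> = c * h (of_nat (Suc k))" unfolding c_def by (rule H.hom_mult)
    also have "h (of_nat (Suc k)) = of_nat (Suc k)" by (rule H.hom_of_nat)
    finally show ?thesis .
  qed
  have "\<sigma> (bn (Suc k)) = \<sigma> c * \<sigma> (\<Prod>i<Suc k. l - of_nat i)" unfolding bn_def c_def[symmetric]
    by (rule S.hom_mult)
  also have "\<dots> = c * ((l + 1) * P)" unfolding 1 c_def \<sigma>fix ..
  also have "\<dots> = c * (P * (l - of_nat k)) + c * of_nat (Suc k) * P"
    by (simp add: algebra_simps)
  also have "\<dots> = bn (Suc k) + bn k" unfolding bn_def c_def[symmetric] 2 3 P_def ..
  finally show ?thesis .
qed

lemma jb_mult_entry:
  assumes Z: "Z \<in> carrier_mat m m" and i: "i < m" and j: "j < m"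
  shows "(map_mat h (jordan_block m a) * Z) $$ (i,j) =
     h a * Z $$ (i,j) + (if Suc i < m then Z $$ (Suc i, j) else 0)"
proof -
  have "(map_mat h (jordan_block m a) * Z) $$ (i,j) =
     (\<Sum>k\<in>{0..<m}. h (if i = k then a else if Suc i = k then 1 else 0) * Z $$ (k,j))"
    using Z i j by (simp add: scalar_prod_def)
  also have "\<dots> = (\<Sum>k\<in>{0..<m}. (if k = i then h a * Z $$ (i,j) else 0)
      + (if k = Suc i then Z $$ (Suc i,j) else 0))"
    by (rule sum.cong, auto)
  also have "\<dots> = h a * Z $$ (i,j) + (if Suc i < m then Z $$ (Suc i, j) else 0)"
    unfolding sum.distrib using i by simp
  finally show ?thesis .
qed

lemma jordan_block_sol:
  assumes a: "a \<noteq> 0"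
  shows "\<exists>Z Z'. Z \<in> carrier_mat m m \<and> Z' \<in> carrier_mat m m \<and> Z * Z' = 1\<^sub>m m \<and> Z' * Z = 1\<^sub>m m
     \<and> map_mat \<sigma> Z = map_mat h (jordan_block m a) * Z"
proof -
  obtain c where c: "\<gamma> c = a" using \<gamma>surj[OF a] by auto
  define \<mu> where "\<mu> = 1 / a"
  have a\<mu>: "a * \<mu> ^ Suc d = \<mu> ^ d" for d using a unfolding \<mu>_def by (simp add: field_simps)
  define Z where "Z = mat m m (\<lambda>(i,j). if i \<le> j then tt c * (h (\<mu> ^ (j - i)) * bn (j - i)) else 0)"
  have Z: "Z \<in> carrier_mat m m" unfolding Z_def by auto
  have eq: "map_mat \<sigma> Z = map_mat h (jordan_block m a) * Z"
  proof (rule eq_matI)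
    fix i j assume i: "i < dim_row (map_mat h (jordan_block m a) * Z)"
      and j: "j < dim_col (map_mat h (jordan_block m a) * Z)"
    hence i: "i < m" and j: "j < m" using Z by auto
    have rhs: "(map_mat h (jordan_block m a) * Z) $$ (i,j) =
     h a * Z $$ (i,j) + (if Suc i < m then Z $$ (Suc i, j) else 0)"
      by (rule jb_mult_entry[OF Z i j])
    show "map_mat \<sigma> Z $$ (i,j) = (map_mat h (jordan_block m a) * Z) $$ (i,j)"
      unfolding rhs
    proof (cases "i \<le> j")
      case False
      thus "map_mat \<sigma> Z $$ (i,j) = h a * Z $$ (i,j) + (if Suc i < m then Z $$ (Suc i, j) else 0)"
        using i j Z unfolding Z_def by simp
    next
      case True
      show "map_mat \<sigma> Z $$ (i,j) = h a * Z $$ (i,j) + (if Suc i < m then Z $$ (Suc i, j) else 0)"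
      proof (cases "i = j")
        case True
        thus ?thesis using i j Z unfolding Z_def by (simp add: bn0 \<sigma>tt c)
      next
        case False
        with \<open>i \<le> j\<close> obtain d where d: "j - i = Suc d" and d2: "j - Suc i = d" 
          by (metis Suc_diff_Suc le_neq_implies_less)
        have si: "Suc i < m" "Suc i \<le> j" using False \<open>i \<le> j\<close> j by auto
        have "map_mat \<sigma> Z $$ (i,j) = \<sigma> (tt c * (h (\<mu> ^ Suc d) * bn (Suc d)))"
          using i j \<open>i \<le> j\<close> d unfolding Z_def by simp
        also have "\<dots> = h a * tt c * (h (\<mu> ^ Suc d) * (bn (Suc d) + bn d))"
          unfolding S.hom_mult \<sigma>tt c \<sigma>fix \<sigma>_bn_Suc by (simp only: mult.assoc)
        also have "\<dots> = h a * (tt c * (h (\<mu> ^ Suc d) * bn (Suc d)))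
           + tt c * ((h a * h (\<mu> ^ Suc d)) * bn d)" by (simp add: algebra_simps)
        also have "h a * h (\<mu> ^ Suc d) = h (\<mu> ^ d)" unfolding H.hom_mult[symmetric] a\<mu> ..
        finally show ?thesis using i j si \<open>i \<le> j\<close> d d2 unfolding Z_def by simp
      qed
    qed
  qed (insert Z, auto)
  have ut: "upper_triangular Z" unfolding Z_def upper_triangular_def by auto
  have "det Z = prod_list (diag_mat Z)" by (rule det_upper_triangular[OF ut Z])
  also have "\<dots> = (\<Prod>i = 0..<m. tt c)" unfolding prod_list_diag_prod using Z
    by (intro prod.cong, auto simp: Z_def bn0)
  also have "\<dots> = tt c ^ m" by simp
  finally have detZ: "det Z = tt c ^ m" .
  have "det Z * tt (- c) ^ m = (tt c * tt (-c)) ^ m" unfolding detZ by (simp add: power_mult_distrib)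
  also have "\<dots> = 1" unfolding ttadd[symmetric] by (simp add: tt0)
  finally obtain Z' where "Z' \<in> carrier_mat m m \<and> Z * Z' = 1\<^sub>m m \<and> Z' * Z = 1\<^sub>m m"
    using inverse_from_det[OF Z] by blast
  thus ?thesis using Z eq by blast
qed

lemma map_zero_mat_h[simp]: "map_mat h (0\<^sub>m r c) = 0\<^sub>m r c" by (intro eq_matI, auto)
lemma map_zero_mat_\<sigma>[simp]: "map_mat \<sigma> (0\<^sub>m r c) = 0\<^sub>m r c" by (intro eq_matI, auto)

lemma jordan_matrix_sol:
  assumes "\<forall>(m,a)\<in>set n_as. a \<noteq> 0"
  shows "\<exists>Z Z'. Z \<in> carrier_mat (sum_list (map fst n_as)) (sum_list (map fst n_as))
     \<and> Z' \<in> carrier_mat (sum_list (map fst n_as)) (sum_list (map fst n_as))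
     \<and> Z * Z' = 1\<^sub>m (sum_list (map fst n_as)) \<and> Z' * Z = 1\<^sub>m (sum_list (map fst n_as))
     \<and> map_mat \<sigma> Z = map_mat h (jordan_matrix n_as) * Z"
  using assms
proof (induct n_as)
  case Nil
  show ?case by (intro exI[of _ "1\<^sub>m 0"], auto intro!: eq_matI)
next
  case (Cons ma rest)
  obtain m a where ma: "ma = (m,a)" by force
  define k where "k = sum_list (map fst rest)"
  from Cons(2) ma have a: "a \<noteq> 0" and rest: "\<forall>(m,a)\<in>set rest. a \<noteq> 0" by auto
  from jordan_block_sol[OF a, of m] obtain Z1 Z1' where Z1: "Z1 \<in> carrier_mat m m" and Z1': "Z1' \<in> carrier_mat m m"
    and i1: "Z1 * Z1' = 1\<^sub>m m" and i1': "Z1' * Z1 = 1\<^sub>m m"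
    and e1: "map_mat \<sigma> Z1 = map_mat h (jordan_block m a) * Z1" by blast
  from Cons(1)[OF rest, folded k_def] obtain Z2 Z2' where Z2: "Z2 \<in> carrier_mat k k" and Z2': "Z2' \<in> carrier_mat k k"
    and i2: "Z2 * Z2' = 1\<^sub>m k" and i2': "Z2' * Z2 = 1\<^sub>m k"
    and e2: "map_mat \<sigma> Z2 = map_mat h (jordan_matrix rest) * Z2" by blast
  define Z where "Z = four_block_mat Z1 (0\<^sub>m m k) (0\<^sub>m k m) Z2"
  define Z' where "Z' = four_block_mat Z1' (0\<^sub>m m k) (0\<^sub>m k m) Z2'"
  have J2: "jordan_matrix rest \<in> carrier_mat k k" unfolding k_def by simp
  have hJ2: "map_mat h (jordan_matrix rest) \<in> carrier_mat k k" using J2 by simp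
  have hJ1: "map_mat h (jordan_block m a) \<in> carrier_mat m m" by simp
  have N: "sum_list (map fst (ma # rest)) = m + k" unfolding ma k_def by simp
  have "Z * Z' = four_block_mat (Z1 * Z1' + 0\<^sub>m m k * 0\<^sub>m k m) (Z1 * 0\<^sub>m m k + 0\<^sub>m m k * Z2')
     (0\<^sub>m k m * Z1' + Z2 * 0\<^sub>m k m) (0\<^sub>m k m * 0\<^sub>m m k + Z2 * Z2')"
    unfolding Z_def Z'_def by (rule mult_four_block_mat[OF Z1 _ _ Z2 Z1' _ _ Z2'], auto)
  also have "\<dots> = 1\<^sub>m (m + k)" using Z1 Z2 Z1' Z2' i1 i2 by simp
  finally have ZZ': "Z * Z' = 1\<^sub>m (m + k)" .
  have "Z' * Z = four_block_mat (Z1' * Z1 + 0\<^sub>m m k * 0\<^sub>m k m) (Z1' * 0\<^sub>m m k + 0\<^sub>m m k * Z2)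
     (0\<^sub>m k m * Z1 + Z2' * 0\<^sub>m k m) (0\<^sub>m k m * 0\<^sub>m m k + Z2' * Z2)"
    unfolding Z_def Z'_def by (rule mult_four_block_mat[OF Z1' _ _ Z2' Z1 _ _ Z2], auto)
  also have "\<dots> = 1\<^sub>m (m + k)" using Z1 Z2 Z1' Z2' i1' i2' by simp
  finally have Z'Z: "Z' * Z = 1\<^sub>m (m + k)" .
  have "map_mat h (jordan_matrix (ma # rest)) = four_block_mat (map_mat h (jordan_block m a)) (0\<^sub>m m k)
     (0\<^sub>m k m) (map_mat h (jordan_matrix rest))"
    unfolding ma jordan_matrix_Cons k_def[symmetric] by (subst map_four_block_mat, auto simp: k_def)
  note hJ = this
  have "map_mat h (jordan_matrix (ma # rest)) * Z = four_block_mat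
     (map_mat h (jordan_block m a) * Z1 + 0\<^sub>m m k * 0\<^sub>m k m) (map_mat h (jordan_block m a) * 0\<^sub>m m k + 0\<^sub>m m k * Z2)
     (0\<^sub>m k m * Z1 + map_mat h (jordan_matrix rest) * 0\<^sub>m k m) (0\<^sub>m k m * 0\<^sub>m m k + map_mat h (jordan_matrix rest) * Z2)"
    unfolding Z_def hJ by (rule mult_four_block_mat[OF hJ1 _ _ hJ2 Z1 _ _ Z2], auto)
  also have "\<dots> = four_block_mat (map_mat \<sigma> Z1) (0\<^sub>m m k) (0\<^sub>m k m) (map_mat \<sigma> Z2)"
  proof -
    have c1: "map_mat h (jordan_block m a) * Z1 \<in> carrier_mat m m" using hJ1 Z1 by auto
    show ?thesis unfolding e1 e2 using Z1 Z2 hJ1 hJ2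
      by (simp add: right_mult_zero_mat[OF hJ2] right_add_zero_mat[OF c1])
  qed
  also have "\<dots> = map_mat \<sigma> Z" unfolding Z_def by (subst map_four_block_mat[OF Z1 _ _ Z2], auto)
  finally have e: "map_mat \<sigma> Z = map_mat h (jordan_matrix (ma # rest)) * Z" ..
  have "Z \<in> carrier_mat (m+k) (m+k)" "Z' \<in> carrier_mat (m+k) (m+k)"
    unfolding Z_def Z'_def using Z1 Z2 Z1' Z2' by auto
  thus ?case unfolding N using ZZ' Z'Z e by blast
qed


lemma map_mat_h_fix: "map_mat \<sigma> (map_mat h A) = map_mat h A" by (intro eq_matI, auto simp: \<sigma>fix)

lemma main_sol:
  fixes M :: "'k mat"
  assumes ac: "alg_closed TYPE('k)" and M: "M \<in> carrier_mat n n" and inv: "invertible_mat M"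
  shows "\<exists>X Y. X \<in> carrier_mat n n \<and> Y \<in> carrier_mat n n \<and> X * Y = 1\<^sub>m n \<and> Y * X = 1\<^sub>m n
     \<and> map_mat h M * map_mat \<sigma> X = X"
proof -
  have dM: "det M \<noteq> 0" by (rule det_ne0_from_invertible[OF M inv])
  define MT where "MT = transpose_mat M"
  have MT: "MT \<in> carrier_mat n n" unfolding MT_def using M by auto
  from triangularize[OF ac MT] obtain B where B: "B \<in> carrier_mat n n" and ut: "upper_triangular B"
    and simB: "similar_mat MT B" by auto
  define n_as where "n_as = triangular_to_jnf_vector B"
  have jnf: "jordan_nf B n_as" unfolding n_as_def by (rule triangular_to_jnf_vector[OF B ut])
  define J where "J = jordan_matrix n_as"
  from jnf have nz: "0 \<notin> fst ` set n_as" and simJ: "similar_mat B J" unfolding jordan_nf_def J_def by auto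
  have sim: "similar_mat MT J" by (rule similar_mat_trans[OF simB simJ])
  have "det J = det MT" using det_similar[OF sim] by simp
  also have "\<dots> = det M" unfolding MT_def by (rule det_transpose[OF M])
  finally have dJ: "det J \<noteq> 0" using dM by simp
  have nz': "\<forall>(m,a)\<in>set n_as. a \<noteq> 0" by (rule jnf_nonzero[OF J_def dJ nz])
  from sim obtain P Q where wit: "similar_mat_wit MT J P Q" unfolding similar_mat_def by auto
  from similar_mat_witD2[OF MT wit] have J: "J \<in> carrier_mat n n" and P: "P \<in> carrier_mat n n"
    and Q: "Q \<in> carrier_mat n n" and PQ: "P * Q = 1\<^sub>m n" and QP: "Q * P = 1\<^sub>m n"
    and MTeq: "MT = P * J * Q" by auto
  have N: "sum_list (map fst n_as) = n" using J unfolding J_def by auto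
  from jordan_matrix_sol[OF nz', unfolded N, folded J_def] obtain Z Z' where
    Z: "Z \<in> carrier_mat n n" and Z': "Z' \<in> carrier_mat n n" and ZZ': "Z * Z' = 1\<^sub>m n"
    and Z'Z: "Z' * Z = 1\<^sub>m n" and eZ: "map_mat \<sigma> Z = map_mat h J * Z" by blast
  define hP where "hP = map_mat h P"
  define hQ where "hQ = map_mat h Q"
  define hJ where "hJ = map_mat h J"
  define hMT where "hMT = map_mat h MT"
  have hP: "hP \<in> carrier_mat n n" and hQ: "hQ \<in> carrier_mat n n" and hJ: "hJ \<in> carrier_mat n n"
    and hMT: "hMT \<in> carrier_mat n n" unfolding hP_def hQ_def hJ_def hMT_def using P Q J MT by auto
  have hQP: "hQ * hP = 1\<^sub>m n" unfolding hQ_def hP_def H.mat_hom_mult[OF Q P, symmetric] QP by (rule H.mat_hom_one)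
  have hPQ: "hP * hQ = 1\<^sub>m n" unfolding hQ_def hP_def H.mat_hom_mult[OF P Q, symmetric] PQ by (rule H.mat_hom_one)
  have PJ: "P * J \<in> carrier_mat n n" using P J by auto
  have "MT * P = P * J * (Q * P)" unfolding MTeq by (rule assoc_mult_mat[OF PJ Q P])
  also have "\<dots> = P * J" unfolding QP by (rule right_mult_one_mat[OF PJ])
  finally have MTP: "MT * P = P * J" .
  have hMTP: "hMT * hP = hP * hJ" unfolding hMT_def hP_def hJ_def
    H.mat_hom_mult[OF MT P, symmetric] H.mat_hom_mult[OF P J, symmetric] MTP ..
  define W where "W = hP * Z"
  define W' where "W' = Z' * hQ"
  have W: "W \<in> carrier_mat n n" and W': "W' \<in> carrier_mat n n" unfolding W_def W'_def using hP Z Z' hQ by auto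
  have "W * W' = hP * (Z * (Z' * hQ))" unfolding W_def W'_def by (rule assoc_mult_mat[OF hP Z], insert Z' hQ, auto)
  also have "Z * (Z' * hQ) = hQ" unfolding assoc_mult_mat[OF Z Z' hQ, symmetric] ZZ' by (rule left_mult_one_mat[OF hQ])
  finally have "W * W' = hP * hQ" .
  hence WW': "W * W' = 1\<^sub>m n" using hPQ by (simp only:)
  have "W' * W = Z' * (hQ * (hP * Z))" unfolding W_def W'_def by (rule assoc_mult_mat[OF Z' hQ], insert Z hP, auto)
  also have "hQ * (hP * Z) = Z" unfolding assoc_mult_mat[OF hQ hP Z, symmetric] hQP by (rule left_mult_one_mat[OF Z])
  finally have "W' * W = Z' * Z" .
  hence W'W: "W' * W = 1\<^sub>m n" using Z'Z by (simp only:)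
  have "map_mat \<sigma> W = map_mat \<sigma> hP * map_mat \<sigma> Z" unfolding W_def by (rule S.mat_hom_mult[OF hP Z])
  also have "map_mat \<sigma> hP = hP" unfolding hP_def by (rule map_mat_h_fix)
  also have "map_mat \<sigma> Z = hJ * Z" unfolding eZ hJ_def ..
  also have "hP * (hJ * Z) = (hP * hJ) * Z" by (rule assoc_mult_mat[OF hP hJ Z, symmetric])
  also have "\<dots> = (hMT * hP) * Z" unfolding hMTP ..
  also have "\<dots> = hMT * W" unfolding W_def by (rule assoc_mult_mat[OF hMT hP Z])
  finally have eW: "map_mat \<sigma> W = hMT * W" .
  define X where "X = transpose_mat W'"
  define Y where "Y = transpose_mat W"
  define hM where "hM = map_mat h M"
  have X: "X \<in> carrier_mat n n" and Y: "Y \<in> carrier_mat n n" and hM: "hM \<in> carrier_mat n n"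
    unfolding X_def Y_def hM_def using W W' M by auto
  have XY: "X * Y = 1\<^sub>m n" unfolding X_def Y_def transpose_mult[OF W W', symmetric] WW' by simp
  have YX: "Y * X = 1\<^sub>m n" unfolding X_def Y_def transpose_mult[OF W' W, symmetric] W'W by simp
  have hMT_T: "transpose_mat hMT = hM" unfolding hMT_def hM_def MT_def map_mat_transpose by simp
  have sW: "map_mat \<sigma> W \<in> carrier_mat n n" and sW': "map_mat \<sigma> W' \<in> carrier_mat n n" using W W' by auto
  have sX: "map_mat \<sigma> X \<in> carrier_mat n n" using X by auto
  have "map_mat \<sigma> W' * map_mat \<sigma> W = map_mat \<sigma> (W' * W)" by (rule S.mat_hom_mult[OF W' W, symmetric])
  also have "\<dots> = 1\<^sub>m n" unfolding W'W by (rule S.mat_hom_one)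
  finally have "transpose_mat (map_mat \<sigma> W) * transpose_mat (map_mat \<sigma> W') = 1\<^sub>m n"
    unfolding transpose_mult[OF sW' sW, symmetric] by simp
  also have "transpose_mat (map_mat \<sigma> W) = Y * hM" unfolding eW Y_def transpose_mult[OF hMT W] hMT_T ..
  also have "transpose_mat (map_mat \<sigma> W') = map_mat \<sigma> X" unfolding X_def map_mat_transpose ..
  finally have YhM: "Y * hM * map_mat \<sigma> X = 1\<^sub>m n" .
  have "X = X * (Y * hM * map_mat \<sigma> X)" unfolding YhM using X by simp
  also have "\<dots> = X * (Y * (hM * map_mat \<sigma> X))" unfolding assoc_mult_mat[OF Y hM sX] ..
  also have "\<dots> = (X * Y) * (hM * map_mat \<sigma> X)" by (rule assoc_mult_mat[OF X Y, symmetric], insert hM sX, auto)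
  also have "\<dots> = hM * map_mat \<sigma> X" unfolding XY by (rule left_mult_one_mat, insert hM sX, auto)
  finally have "hM * map_mat \<sigma> X = X" by simp
  thus ?thesis unfolding hM_def using X Y XY YX by blast
qed

end

theorem mainTheorem7:
  fixes cK :: "'k::field_char_0 \<Rightarrow> 'a::comm_ring_1" and T :: 'a and D :: "'a \<Rightarrow> 'a"
    and R :: "'k set" and \<gamma> :: "'k \<Rightarrow> 'k"
    and iA :: "'a \<Rightarrow> 'e::comm_ring_1" and tt :: "'k \<Rightarrow> 'e" and l :: 'e and \<sigma> :: "'e \<Rightarrow> 'e"
    and n :: nat and M :: "'k mat"
  assumes "alg_closed TYPE('k)"
    and "laurent_subring cK T"
    and "extends_t_ddt cK T D"
    and "reps_mod_Z R"
    and "gamma_char \<gamma>"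
    and "EA_pres cK T R iA tt l"
    and "sigma_char cK iA tt l \<gamma> \<sigma>"
    and "M \<in> carrier_mat n n" and "invertible_mat M"
  shows "\<exists>bs. is_basis_vecs n bs \<and>
           (\<forall>b\<in>set bs. map_mat (iA \<circ> cK) M *\<^sub>v map_vec \<sigma> b = b)"
proof -
  note ac = assms(1) and M = assms(8) and inv = assms(9)
  from assms(2) have cK: "ring_hom_fun cK" unfolding laurent_subring_def by auto
  from assms(6) have iA: "ring_hom_fun iA" and tt0: "tt 0 = 1" and ttadd: "\<And>a b. tt (a + b) = tt a * tt b"
    unfolding EA_pres_def by auto
  from assms(7) have \<sigma>h: "ring_hom_fun \<sigma>" and \<sigma>iA: "\<And>f. \<sigma> (iA f) = iA f"
    and \<sigma>tt: "\<And>a. \<sigma> (tt a) = iA (cK (\<gamma> a)) * tt a" and \<sigma>l: "\<sigma> l = l + 1"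
    unfolding sigma_char_def by auto
  from assms(5) have \<gamma>s: "\<And>c. c \<noteq> 0 \<Longrightarrow> \<exists>a. \<gamma> a = c" unfolding gamma_char_def by auto
  have h: "ring_hom_fun (iA \<circ> cK)" using cK iA unfolding ring_hom_fun_def by auto
  interpret EAsetup "iA \<circ> cK" tt l \<gamma> \<sigma>
    by (unfold_locales, insert h \<sigma>h \<sigma>iA tt0 ttadd \<sigma>tt \<sigma>l \<gamma>s, auto)
  from main_sol[OF ac M inv] obtain X Y where X: "X \<in> carrier_mat n n" and Y: "Y \<in> carrier_mat n n"
    and XY: "X * Y = 1\<^sub>m n" and YX: "Y * X = 1\<^sub>m n"
    and eX: "map_mat (iA \<circ> cK) M * map_mat \<sigma> X = X" by blast
  define bs where "bs = cols X"
  have hM: "map_mat (iA \<circ> cK) M \<in> carrier_mat n n" using M by auto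
  have sX: "map_mat \<sigma> X \<in> carrier_mat n n" using X by auto
  have moc: "mat_of_cols n bs = X" unfolding bs_def using X mat_of_cols_cols[of X] by auto
  have basis: "is_basis_vecs n bs"
    unfolding is_basis_vecs_def
  proof (intro conjI ballI)
    show "length bs = n" unfolding bs_def using X by simp
    fix b assume "b \<in> set bs"
    thus "b \<in> carrier_vec n" unfolding bs_def using X by (auto simp: cols_def)
  next
    fix y :: "'e vec" assume y: "y \<in> carrier_vec n"
    show "\<exists>!c. c \<in> carrier_vec n \<and> mat_of_cols n bs *\<^sub>v c = y" unfolding moc
    proof (intro ex1I[of _ "Y *\<^sub>v y"] conjI)
      show "Y *\<^sub>v y \<in> carrier_vec n" using Y y by auto
      show "X *\<^sub>v (Y *\<^sub>v y) = y" using assoc_mult_mat_vec[OF X Y y, symmetric] XY y by simp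
      fix c assume c: "c \<in> carrier_vec n \<and> X *\<^sub>v c = y"
      hence "Y *\<^sub>v (X *\<^sub>v c) = Y *\<^sub>v y" by simp
      thus "c = Y *\<^sub>v y" using assoc_mult_mat_vec[OF Y X, of c] c YX by simp
    qed
  qed
  have "\<forall>b\<in>set bs. map_mat (iA \<circ> cK) M *\<^sub>v map_vec \<sigma> b = b"
  proof
    fix b assume "b \<in> set bs"
    then obtain j where j: "j < n" and b: "b = col X j" unfolding bs_def using X by (auto simp: cols_def)
    have "map_vec \<sigma> b = col (map_mat \<sigma> X) j" unfolding b using j X by simp
    hence "map_mat (iA \<circ> cK) M *\<^sub>v map_vec \<sigma> b = col (map_mat (iA \<circ> cK) M * map_mat \<sigma> X) j"
      using col_mult2[OF hM sX j] by simp
    thus "map_mat (iA \<circ> cK) M *\<^sub>v map_vec \<sigma> b = b" unfolding eX b .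
  qed
  with basis show ?thesis by blast
qed

end
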